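(* Consider the reflected geometric Brownian motion (RGBM) model, in which the bank account is $B_t=\mathrm{e}^{rt}$ with $r\geq 0$ and the stock price $S$ solves $\mathrm{d}S_t=\mu S_t\,\mathrm{d}t+\sigma S_t\,\mathrm{d}W_t+\mathrm{d}L_t$ with lower reflecting boundary $b>0$ (where $L$ is the reflection term). Let the European put price with strike $K\geq b$ and maturity $T$ be given, for $(t,S)\in[0,T]\times[b,\infty)$, by the published RGBM put pricing formula \[ \begin{split} P(t,S)&=K\mathrm{e}^{-r(T-t)}\Phi\bigl(-z_1+\sigma\sqrt{T-t}\bigr)-b\mathrm{e}^{-r(T-t)}\Phi(z_4)-S\bigl(\Phi\bigl(-z_4+\sigma\sqrt{T-t}\bigr)-\Phi(z_1)\bigr)\\ &\quad-\frac{1}{\theta}\Bigl(S\bigl(\tfrac{b}{S}\bigr)^{1+\theta}\bigl(\Phi\bigl(z_4+\theta\sigma\sqrt{T-t}\bigr)-\Phi(z_3)\bigr)-b\mathrm{e}^{-r(T-t)}\Phi(z_4)+K\mathrm{e}^{-r(T-t)}\bigl(\tfrac{K}{b}\bigr)^{\theta-1}\Phi\bigl(z_3-\theta\sigma\sqrt{T-t}\bigr)\Bigr), \end{split} \] where $z_1=\frac{\ln\frac{S}{K}+(r+\frac12\sigma^2)(T-t)}{\sigma\sqrt{T-t}}$, $z_3=\frac{\ln\frac{b^2}{KS}+(r+\frac12\sigma^2)(T-t)}{\sigma\sqrt{T-t}}$, $z_4=\frac{\ln\frac{b}{S}-(r-\frac12\sigma^2)(T-t)}{\sigma\sqrt{T-t}}$,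 $\theta=\frac{2r}{\sigma^2}$, and $\Phi$ is the standard normal cumulative distribution function. Then the put price obtained from this formula violates the model-independent lower bound $P(t,S)\geq K\mathrm{e}^{-r(T-t)}-S$ (which must hold for all $(t,S)\in[0,T]\times[b,\infty)$ whenever an equivalent risk-neutral probability measure exists) under certain parameter regimes, when the stock price is close to the reflecting boundary $b$.
   Context: The lower bound $P(t,S)\geq \mathrm{E}^{\mathbb{Q}}_{t,S}(\mathrm{e}^{-r(T-t)}(K-S_T))\geq K\mathrm{e}^{-r(T-t)}-S$ follows if $\mathbb{Q}$ is an equivalent risk-neutral probability measure, since the discounted stock price is then a nonnegative $\mathbb{Q}$-local martingale and hence a $\mathbb{Q}$-supermartingale. $\Phi$ denotes the standard normal CDF. *)

theory Defs
  imports "HOL-Probability.Probability"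
begin

definition Phi :: "real \<Rightarrow> real" where
  "Phi x = measure (density lborel std_normal_density) {..x}"

definition rgbm_put ::
  "real \<Rightarrow> real \<Rightarrow> real \<Rightarrow> real \<Rightarrow> real \<Rightarrow> real \<Rightarrow> real \<Rightarrow> real" where
  "rgbm_put r \<sigma> b K T t S =
    (let tau = T - t;
         v = \<sigma> * sqrt tau;
         D = exp (- r * tau);
         \<theta> = 2 * r / \<sigma>\<^sup>2;
         z1 = (ln (S / K) + (r + \<sigma>\<^sup>2 / 2) * tau) / v;
         z3 = (ln (b\<^sup>2 / (K * S)) + (r + \<sigma>\<^sup>2 / 2) * tau) / v;
         z4 = (ln (b / S) - (r - \<sigma>\<^sup>2 / 2) * tau) / v
     in K * D * Phi (- z1 + v) - b * D * Phi z4
        - S * (Phi (- z4 + v) - Phi z1)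
        - (1 / \<theta>) * (S * (b / S) powr (1 + \<theta>) * (Phi (z4 + \<theta> * v) - Phi z3)
                      - b * D * Phi z4
                      + K * D * (K / b) powr (\<theta> - 1) * Phi (z3 - \<theta> * v)))"

end

theory Submission imports Defs begin
interpretation N: real_distribution std_normal_distribution by (rule real_dist_normal_dist)

lemma Phi_cdf: "Phi x = cdf std_normal_distribution x"
  by (simp add: Phi_def cdf_def2)

lemma sing0: "measure std_normal_distribution {x} = 0"
proof -
  have "emeasure std_normal_distribution {x} = 0"
    by (subst emeasure_density) (auto intro!: nn_integral_null_set)
  then show ?thesis by (simp add: measure_def)
qed

lemma isCont_Phi: "isCont Phi x"
  unfolding Phi_cdf[abs_def] using N.isCont_cdf sing0 by (metis Phi_cdf ext)

lemma Phi_sym: "Phi (- x) = 1 - Phi x"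
proof -
  let ?d = "\<lambda>y. ennreal (std_normal_density y)"
  have "emeasure std_normal_distribution {..-x} = (\<integral>\<^sup>+y. ?d y * indicator {..-x} y \<partial>lborel)"
    by (subst emeasure_density) auto
  also have "\<dots> = (\<integral>\<^sup>+y. ?d (0 + (-1) * y) * indicator {..-x} (0 + (-1) * y) \<partial>lborel)"
    using nn_integral_real_affine[of "\<lambda>y. ?d y * indicator {..-x} y" "-1" 0] by simp
  also have "\<dots> = (\<integral>\<^sup>+y. ?d y * indicator {x..} y \<partial>lborel)"
    by (intro nn_integral_cong) (auto simp: std_normal_density_def indicator_def)
  also have "\<dots> = emeasure std_normal_distribution {x..}"
    by (subst emeasure_density) auto
  finally have "measure std_normal_distribution {..-x} = measure std_normal_distribution {x..}"
    by (simp add: measure_def)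
  also have "\<dots> = 1 - measure std_normal_distribution {..<x}"
  proof -
    have "measure std_normal_distribution ({x..} \<union> {..<x}) = measure std_normal_distribution {x..} + measure std_normal_distribution {..<x}"
      by (intro N.finite_measure_Union) auto
    moreover have "{x..} \<union> {..<x} = (UNIV::real set)" by auto
    ultimately show ?thesis using N.prob_space by simp
  qed
  also have "measure std_normal_distribution {..<x} = measure std_normal_distribution {..x}"
  proof -
    have "measure std_normal_distribution ({..<x} \<union> {x}) = measure std_normal_distribution {..<x} + measure std_normal_distribution {x}"
      by (intro N.finite_measure_Union) auto
    moreover have "{..<x} \<union> {x} = {..x}" by auto
    ultimately show ?thesis using sing0 by simp
  qed
  finally show ?thesis by (simp add: Phi_def)
qed

lemma Phi_pos: "Phi x > 0"
proof -
  let ?d = "\<lambda>y. ennreal (std_normal_density y)"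
  have "emeasure std_normal_distribution {..x} = (\<integral>\<^sup>+y. ?d y * indicator {..x} y \<partial>lborel)"
    by (subst emeasure_density) auto
  moreover have "(\<integral>\<^sup>+y. ?d y * indicator {..x} y \<partial>lborel) \<noteq> 0"
  proof
    assume "(\<integral>\<^sup>+y. ?d y * indicator {..x} y \<partial>lborel) = 0"
    then have "AE y in lborel. ?d y * indicator {..x} y = 0"
      by (subst (asm) nn_integral_0_iff_AE) auto
    then have "AE y in lborel. y \<notin> {..x}"
      by eventually_elim (auto simp: std_normal_density_def indicator_def)
    then have "{..x} \<in> null_sets lborel"
      using AE_iff_null_sets[of "{..x}" lborel] by simp
    then have "{x-1..x} \<in> null_sets lborel"
      by (rule null_sets_subset) auto
    then show False by (simp add: null_sets_def)
  qed
  ultimately have "emeasure std_normal_distribution {..x} \<noteq> 0" by simp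
  then have "measure std_normal_distribution {..x} \<noteq> 0"
    by (simp add: N.emeasure_eq_measure)
  then show ?thesis unfolding Phi_def using measure_nonneg[of std_normal_distribution "{..x}"]
    by linarith
qed

lemma isCont_Phi_comp[continuous_intros]: "isCont f x \<Longrightarrow> isCont (\<lambda>y. Phi (f y)) x"
  using isCont_o2[OF _ isCont_Phi] by blast

definition g :: "real \<Rightarrow> real" where
  "g S = exp 1 * exp (- (1/2) * (1 - 0)) - S - rgbm_put (1/2) 1 1 (exp 1) 1 0 S"

lemma g1: "g 1 = 2 * (exp (1/2) - 1) * (1 - Phi 1)"
proof -
  have e: "exp 1 * exp (- (1/2)) = exp (1/2::real)" by (simp add: exp_add[symmetric])
  have l: "ln (1 / exp 1) = (-1::real)" by (simp add: ln_div)
  show ?thesis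
    unfolding g_def rgbm_put_def Let_def
    using Phi_sym[of 0] by (simp add: l e Phi_sym algebra_simps)
qed

lemma g1pos: "g 1 > 0"
proof -
  have "Phi 1 < 1" using Phi_pos[of "-1"] Phi_sym[of 1] by simp
  moreover have "exp (1/2::real) > 1" by simp
  ultimately show ?thesis unfolding g1 by simp
qed

lemma gcont: "isCont g 1"
  unfolding g_def rgbm_put_def Let_def
  by (intro continuous_intros) auto

theorem proposition3p4:
  shows "\<exists>r \<sigma> b K T t. r > 0 \<and> \<sigma> > 0 \<and> b > 0 \<and> K \<ge> b \<and> 0 \<le> t \<and> t < T \<and>
           (\<exists>\<delta> > 0. \<forall>S. b \<le> S \<and> S < b + \<delta> \<longrightarrow>
               rgbm_put r \<sigma> b K T t S < K * exp (- r * (T - t)) - S)"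
proof -
  have "eventually (\<lambda>S. g S > 0) (nhds 1)"
  proof -
    have "(g \<longlongrightarrow> g 1) (nhds 1)" using gcont by (simp add: isCont_def tendsto_at_iff_tendsto_nhds)
    then show ?thesis using g1pos by (rule order_tendstoD(1))
  qed
  then obtain d where d: "d > 0" "\<And>S. dist S 1 < d \<Longrightarrow> g S > 0"
    unfolding eventually_nhds_metric by blast
  have "\<forall>S. 1 \<le> S \<and> S < 1 + d \<longrightarrow>
               rgbm_put (1/2) 1 1 (exp 1) 1 0 S < exp 1 * exp (- (1/2) * (1 - 0)) - S"
  proof (intro allI impI)
    fix S :: real assume "1 \<le> S \<and> S < 1 + d"
    then have "dist S 1 < d" by (simp add: dist_real_def)
    then show "rgbm_put (1/2) 1 1 (exp 1) 1 0 S < exp 1 * exp (- (1/2) * (1 - 0)) - S"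
      using d(2) unfolding g_def by fastforce
  qed
  moreover have "(1::real) \<le> exp 1" by simp
  ultimately show ?thesis using d(1)
    by (intro exI[of _ "1/2"] exI[of _ 1] exI[of _ 1] exI[of _ "exp 1"] exI[of _ 1] exI[of _ 0]) auto
qed

end
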